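(* Let $Y$ be uniformly distributed on a finite set $\mathcal{Y}=\{y_1,\dots,y_m\}\subset\mathbb{R}$ of $m$ distinct values ($m\in\mathbb{N}$ arbitrary), and let $k\ge 0$ be the number of shared key bits. Then: (1) there exists an encoding scheme (with $r=m$ transmission symbols) whose eavesdropper distortion $D_{ach}(k)$ satisfies $$\Delta = D_{max}-D_{ach}(k)\le \frac{D_{max}}{2^k};$$ (2) with $d=\max_{y_i,y_j\in\mathcal{Y}}(y_i-y_j)$, there exists an encoding scheme (with $r=m$ transmission symbols) whose eavesdropper distortion satisfies $$\Delta = D_{max}-D_{ach}(k)\le \frac{d^2}{2^{2k}}.$$
   Context: Single-source setting. $Y$ is a real random variable taking values in a finite set $\mathcal{Y}=\{y_1,\dots,y_m\}\subset\mathbb{R}$ of distinct values. A source and a receiver share a secret key $K$, uniform on $\{1,\dots,2^k\}$ and independent of $Y$. An encoding scheme consists of a finite set of transmission symbols $\{\tau_1,\dots,\tau_r\}$ together with, for each key value $i\in\{1,\dots,2^k\}$, an injective map $\sigma_i:\mathcal{Y}\to\{\tau_1,\dots,\tau_r\}$ (injectivity guarantees that the receiver, knowing $K$, recovers $Y$ exactly); the source transmits $T=\sigma_K(Y)$. An eavesdropper observes $T$ but not $K$. Her distortion is $D_{ach}(k)=\min_{\hat f}\mathbb{E}[(Y-\hat f(T))^2]$, the minimum over all functions $\hat f$ of the observed symbol, and $D_{max}=\mathrm{var}(Y)$. Write $\Delta=D_{max}-D_{ach}(k)$. *)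

theory Defs
  imports Complex_Main
begin

text \<open>Y is uniform on the finite set Ys of reals; the key K is uniform on {1..2^k},
  independent of Y. Transmission symbols tau_1..tau_r are represented by {1..r}.\<close>

definition encoding_scheme :: "real set \<Rightarrow> nat \<Rightarrow> nat \<Rightarrow> (nat \<Rightarrow> real \<Rightarrow> nat) \<Rightarrow> bool" where
  "encoding_scheme Ys k r \<sigma> \<longleftrightarrow>
     (\<forall>i\<in>{1..2^k}. inj_on (\<sigma> i) Ys \<and> \<sigma> i ` Ys \<subseteq> {1..r})"

text \<open>Mean squared error E[(Y - fhat(T))^2] with T = sigma_K(Y), (Y,K) uniform on Ys x {1..2^k}.\<close>
definition eve_mse :: "real set \<Rightarrow> nat \<Rightarrow> (nat \<Rightarrow> real \<Rightarrow> nat) \<Rightarrow> (nat \<Rightarrow> real) \<Rightarrow> real" where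
  "eve_mse Ys k \<sigma> fhat =
     (\<Sum>i\<in>{1..2^k}. \<Sum>y\<in>Ys. (y - fhat (\<sigma> i y))^2) / (real (card Ys) * 2^k)"

definition D_ach :: "real set \<Rightarrow> nat \<Rightarrow> (nat \<Rightarrow> real \<Rightarrow> nat) \<Rightarrow> real" where
  "D_ach Ys k \<sigma> = (INF fhat. eve_mse Ys k \<sigma> fhat)"

definition mean_unif :: "real set \<Rightarrow> real" where
  "mean_unif Ys = (\<Sum>y\<in>Ys. y) / real (card Ys)"

definition D_max :: "real set \<Rightarrow> real" where
  "D_max Ys = (\<Sum>y\<in>Ys. (y - mean_unif Ys)^2) / real (card Ys)"

end

theory Submission imports Defs begin

lemma shift_inv1: "c < (m::nat) \<Longrightarrow> x < m \<Longrightarrow> ((x + m - c) mod m + c) mod m = x"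
proof -
  assume a: "c < m" "x < m"
  have "((x + m - c) mod m + c) mod m = (x + m - c + c) mod m" by (simp add: mod_add_left_eq)
  also have "x + m - c + c = x + m" using a by simp
  finally show ?thesis using a by simp
qed

lemma shift_inv2: "c < (m::nat) \<Longrightarrow> x < m \<Longrightarrow> ((x + c) mod m + m - c) mod m = x"
proof -
  assume a: "c < m" "x < m"
  have "(x + c) mod m + m - c = (x + c) mod m + (m - c)" using a by simp
  hence "((x + c) mod m + m - c) mod m = (x + c + (m - c)) mod m" by (simp add: mod_add_left_eq)
  also have "x + c + (m - c) = x + m" using a by simp
  finally show ?thesis using a by simp
qed

lemma shift_sum: assumes "c < (m::nat)"
  shows "(\<Sum>u<m. F ((u + c) mod m)) = (\<Sum>j<m. F j)"
  by (rule sum.reindex_bij_witness[where i="\<lambda>j. (j + m - c) mod m" and j="\<lambda>u. (u + c) mod m"])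
     (use assms shift_inv1 shift_inv2 in auto)

lemma shift_sum2: assumes "c < (m::nat)"
  shows "(\<Sum>j<m. H ((j + m - c) mod m) j) = (\<Sum>u<m. H u ((u + c) mod m))"
  by (rule sum.reindex_bij_witness[where j="\<lambda>j. (j + m - c) mod m" and i="\<lambda>u. (u + c) mod m"])
     (use assms shift_inv1 shift_inv2 in auto)

lemma sq_ineq:
  fixes b :: "nat \<Rightarrow> real" and K :: "nat set"
  assumes "finite K" "card K = n" "n > 0"
  shows "(\<Sum>i\<in>K. b i ^ 2) - (\<Sum>i\<in>K. b i)^2 / n \<le> (\<Sum>i\<in>K. (b i - g)^2)"
proof -
  have e: "(\<Sum>i\<in>K. (b i - g)^2) = (\<Sum>i\<in>K. b i ^ 2) - 2 * g * (\<Sum>i\<in>K. b i) + n * g^2"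
  proof -
    have "(\<Sum>i\<in>K. (b i - g)^2) = (\<Sum>i\<in>K. b i ^ 2 - (2 * g) * b i + g^2)"
      by (rule sum.cong) (auto simp: power2_diff)
    also have "\<dots> = (\<Sum>i\<in>K. b i ^ 2) - (2 * g) * (\<Sum>i\<in>K. b i) + n * g^2"
      using assms by (simp add: sum.distrib sum_subtractf sum_distrib_left)
    finally show ?thesis .
  qed
  have "0 \<le> (n * g - (\<Sum>i\<in>K. b i))^2 / n" using assms by simp
  also have "(n * g - (\<Sum>i\<in>K. b i))^2 / n = n * g^2 - 2 * g * (\<Sum>i\<in>K. b i) + (\<Sum>i\<in>K. b i)^2 / n"
    using assms by (simp add: power2_diff field_simps power2_eq_square)
  finally show ?thesis using e by linarith
qed

lemma key_lower:
  fixes Ys :: "real set" and e :: "nat \<Rightarrow> real" and c :: "nat \<Rightarrow> nat" and f :: "nat \<Rightarrow> real"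
  assumes fin: "finite Ys" and mdef: "card Ys = m" and mpos: "m > 0"
    and bij: "bij_betw e {..<m} Ys" and cm: "\<And>i. c i < m"
    and sdef: "\<sigma> = (\<lambda>i y. (inv_into {..<m} e y + m - c i) mod m + 1)"
  shows "D_max Ys - (\<Sum>u<m. (\<Sum>i\<in>{1..2^k}. e ((u + c i) mod m) - mean_unif Ys)^2) / (real m * (2^k)^2)
          \<le> eve_mse Ys k \<sigma> f"
proof -
  define \<mu> where "\<mu> = mean_unif Ys"
  define N :: nat where "N = 2^k"
  define K where "K = {1..N}"
  define a where "a j = e j - \<mu>" for j
  define g where "g u = f (u + 1) - \<mu>" for u
  define b where "b i u = a ((u + c i) mod m)" for i u
  have Npos: "N > 0" and cardK: "card K = N" and finK: "finite K" by (auto simp: N_def K_def)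
  have hs: "\<sigma> i (e j) = (j + m - c i) mod m + 1" if "j < m" for i j
    using that bij by (simp add: sdef bij_betw_inv_into_left)
  have s1: "(\<Sum>y\<in>Ys. (y - f (\<sigma> i y))^2) = (\<Sum>u<m. (b i u - g u)^2)" for i
  proof -
    have "(\<Sum>y\<in>Ys. (y - f (\<sigma> i y))^2) = (\<Sum>j<m. (e j - f (\<sigma> i (e j)))^2)"
      using sum.reindex_bij_betw[OF bij, of "\<lambda>y. (y - f (\<sigma> i y))^2"] by simp
    also have "\<dots> = (\<Sum>j<m. (\<lambda>u j. (e j - f (u + 1))^2) ((j + m - c i) mod m) j)"
      by (rule sum.cong) (auto simp: hs)
    also have "\<dots> = (\<Sum>u<m. (\<lambda>u j. (e j - f (u + 1))^2) u ((u + c i) mod m))"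
      by (rule shift_sum2[OF cm])
    also have "\<dots> = (\<Sum>u<m. (b i u - g u)^2)"
      by (simp add: b_def a_def g_def)
    finally show ?thesis .
  qed
  have T: "eve_mse Ys k \<sigma> f = (\<Sum>u<m. \<Sum>i\<in>K. (b i u - g u)^2) / (real m * N)"
    unfolding eve_mse_def using s1 mdef
    by (simp add: K_def N_def sum.swap[of _ "{..<m}"])
  define P where "P u = (\<Sum>i\<in>K. b i u)" for u
  have lb: "(\<Sum>u<m. (\<Sum>i\<in>K. b i u ^ 2) - (P u)^2 / N) \<le> (\<Sum>u<m. \<Sum>i\<in>K. (b i u - g u)^2)"
    by (rule sum_mono) (use sq_ineq[OF finK cardK Npos] in \<open>auto simp: P_def\<close>)
  have bb: "(\<Sum>u<m. \<Sum>i\<in>K. b i u ^ 2) = N * (\<Sum>j<m. a j ^ 2)"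
  proof -
    have "(\<Sum>u<m. \<Sum>i\<in>K. b i u ^ 2) = (\<Sum>i\<in>K. \<Sum>u<m. (\<lambda>j. a j ^ 2) ((u + c i) mod m))"
      by (simp add: b_def sum.swap[of _ "{..<m}"])
    also have "\<dots> = (\<Sum>i\<in>K. \<Sum>j<m. a j ^ 2)"
      by (rule sum.cong[OF refl], rule shift_sum[OF cm])
    finally show ?thesis using cardK by simp
  qed
  have aD: "(\<Sum>j<m. a j ^ 2) = m * D_max Ys"
  proof -
    have "(\<Sum>j<m. a j ^ 2) = (\<Sum>y\<in>Ys. (y - \<mu>)^2)"
      using sum.reindex_bij_betw[OF bij, of "\<lambda>y. (y - \<mu>)^2"] by (simp add: a_def)
    thus ?thesis using mpos mdef by (simp add: D_max_def \<mu>_def)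
  qed
  have PP: "(\<Sum>u<m. (\<Sum>i\<in>{1..2^k}. e ((u + c i) mod m) - mean_unif Ys)^2) = (\<Sum>u<m. (P u)^2)"
    by (simp add: P_def K_def N_def b_def a_def \<mu>_def sum_subtractf)
  define Q where "Q = (\<Sum>u<m. (P u)^2)"
  have main: "real N * m * D_max Ys - Q / N \<le> (\<Sum>u<m. \<Sum>i\<in>K. (b i u - g u)^2)"
    using lb bb aD by (simp add: Q_def sum_subtractf sum_divide_distrib[symmetric])
  have "D_max Ys - Q / (real m * N^2) \<le> (\<Sum>u<m. \<Sum>i\<in>K. (b i u - g u)^2) / (real m * N)"
  proof -
    have "D_max Ys - Q / (real m * N^2) = (real N * m * D_max Ys - Q / N) / (real m * N)"
      using mpos Npos by (simp add: field_simps power2_eq_square)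
    also have "\<dots> \<le> (\<Sum>u<m. \<Sum>i\<in>K. (b i u - g u)^2) / (real m * N)"
      using main mpos Npos by (intro divide_right_mono) auto
    finally show ?thesis .
  qed
  thus ?thesis using T PP by (simp add: Q_def N_def)
qed

lemma enc_ok:
  assumes mpos: "m > 0" and bij: "bij_betw e {..<m} Ys" and cm: "\<And>i. c i < (m::nat)"
  shows "encoding_scheme Ys k m (\<lambda>i y. (inv_into {..<m} e y + m - c i) mod m + 1)"
  unfolding encoding_scheme_def
proof (intro ballI conjI)
  fix i
  show "inj_on (\<lambda>y. (inv_into {..<m} e y + m - c i) mod m + 1) Ys"
  proof (rule inj_onI)
    fix y y' assume y: "y \<in> Ys" "y' \<in> Ys" and eq: "(inv_into {..<m} e y + m - c i) mod m + 1 = (inv_into {..<m} e y' + m - c i) mod m + 1"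
    have l: "inv_into {..<m} e y < m" "inv_into {..<m} e y' < m"
      using y bij by (auto intro!: inv_into_into[of _ _ "{..<m}", simplified] simp: bij_betw_def)
    have "inv_into {..<m} e y = inv_into {..<m} e y'"
      using shift_inv1[OF cm[of i] l(1)] shift_inv1[OF cm[of i] l(2)] eq by (metis add_right_cancel)
    thus "y = y'" using y bij by (metis bij_betw_inv_into_right)
  qed
  show "(\<lambda>y. (inv_into {..<m} e y + m - c i) mod m + 1) ` Ys \<subseteq> {1..m}"
    using mpos by (auto simp: Suc_le_eq)
qed

lemma greedy:
  fixes a :: "nat \<Rightarrow> real"
  fixes N :: nat
  assumes mpos: "m > 0" and a0: "(\<Sum>j<m. a j) = 0"
  shows "\<exists>c. (\<forall>i. c i < m) \<and> (\<Sum>u<m. (\<Sum>i\<in>{1..N}. a ((u + c i) mod m))^2) \<le> N * (\<Sum>j<m. a j ^ 2)"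
proof (induction N)
  case 0
  show ?case using mpos by (intro exI[of _ "\<lambda>_. 0"]) auto
next
  case (Suc N)
  then obtain c where c: "\<forall>i. c i < m" and cb: "(\<Sum>u<m. (\<Sum>i\<in>{1..N}. a ((u + c i) mod m))^2) \<le> N * (\<Sum>j<m. a j ^ 2)"
    by blast
  define P where "P u = (\<Sum>i\<in>{1..N}. a ((u + c i) mod m))" for u
  have "\<exists>c'<m. (\<Sum>u<m. P u * a ((u + c') mod m)) \<le> 0"
  proof (rule ccontr)
    assume "\<not> ?thesis"
    hence pos: "\<And>c'. c' < m \<Longrightarrow> 0 < (\<Sum>u<m. P u * a ((u + c') mod m))" by (meson not_le)
    have "0 < (\<Sum>c'<m. \<Sum>u<m. P u * a ((u + c') mod m))"
      by (rule sum_pos) (use mpos pos in auto)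
    also have "\<dots> = (\<Sum>u<m. P u * (\<Sum>c'<m. a ((c' + u) mod m)))"
      by (subst sum.swap) (simp add: sum_distrib_left add.commute[of "_::nat"])
    also have "\<dots> = (\<Sum>u<m. P u * (\<Sum>j<m. a j))"
      by (rule sum.cong[OF refl]) (simp add: shift_sum)
    also have "\<dots> = 0" using a0 by simp
    finally show False by simp
  qed
  then obtain c' where c'm: "c' < m" and cross: "(\<Sum>u<m. P u * a ((u + c') mod m)) \<le> 0" by blast
  define c2 where "c2 = c(Suc N := c')"
  have c2m: "\<forall>i. c2 i < m" using c c'm by (simp add: c2_def)
  have split: "(\<Sum>i\<in>{1..Suc N}. a ((u + c2 i) mod m)) = P u + a ((u + c') mod m)" for u
  proof -
    have "(\<Sum>i\<in>{1..N}. a ((u + c2 i) mod m)) = P u"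
      unfolding P_def by (rule sum.cong) (auto simp: c2_def)
    thus ?thesis by (simp add: c2_def)
  qed
  have "(\<Sum>u<m. (\<Sum>i\<in>{1..Suc N}. a ((u + c2 i) mod m))^2)
      = (\<Sum>u<m. (P u)^2) + 2 * (\<Sum>u<m. P u * a ((u + c') mod m)) + (\<Sum>u<m. a ((u + c') mod m) ^ 2)"
  proof -
    have "(\<Sum>u<m. (\<Sum>i\<in>{1..Suc N}. a ((u + c2 i) mod m))^2)
        = (\<Sum>u<m. (P u)^2 + 2 * (P u * a ((u + c') mod m)) + a ((u + c') mod m) ^ 2)"
      by (rule sum.cong[OF refl]) (simp only: split power2_sum mult.assoc)
    also have "\<dots> = (\<Sum>u<m. (P u)^2) + 2 * (\<Sum>u<m. P u * a ((u + c') mod m)) + (\<Sum>u<m. a ((u + c') mod m) ^ 2)"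
      by (simp only: sum.distrib sum_distrib_left)
    finally show ?thesis .
  qed
  also have "(\<Sum>u<m. a ((u + c') mod m) ^ 2) = (\<Sum>j<m. a j ^ 2)"
    by (rule shift_sum[OF c'm])
  finally have eq: "(\<Sum>u<m. (\<Sum>i\<in>{1..Suc N}. a ((u + c2 i) mod m))^2)
      = (\<Sum>u<m. (P u)^2) + 2 * (\<Sum>u<m. P u * a ((u + c') mod m)) + (\<Sum>j<m. a j ^ 2)" .
  have cb': "(\<Sum>u<m. (P u)^2) \<le> N * (\<Sum>j<m. a j ^ 2)" using cb by (simp only: P_def)
  have "real (Suc N) * (\<Sum>j<m. a j ^ 2) = N * (\<Sum>j<m. a j ^ 2) + (\<Sum>j<m. a j ^ 2)"
    by (simp add: distrib_right)
  hence "(\<Sum>u<m. (\<Sum>i\<in>{1..Suc N}. a ((u + c2 i) mod m))^2) \<le> Suc N * (\<Sum>j<m. a j ^ 2)"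
    using eq cb' cross by linarith
  thus ?case using c2m by blast
qed


lemma ordering:
  fixes v :: "real \<Rightarrow> real"
  assumes "finite A" "lo \<le> 0" "0 \<le> hi" "\<forall>y\<in>A. lo \<le> v y \<and> v y \<le> hi"
    "lo \<le> s" "s \<le> hi" "s + sum v A = 0"
  shows "\<exists>xs. distinct xs \<and> set xs = A \<and>
     (\<forall>k\<le>length xs. lo \<le> s + (\<Sum>j<k. v (xs!j)) \<and> s + (\<Sum>j<k. v (xs!j)) \<le> hi)"
  using assms
proof (induction "card A" arbitrary: A s)
  case 0
  hence "A = {}" by simp
  thus ?case using 0 by (intro exI[of _ "[]"]) auto
next
  case (Suc n)
  hence ne: "A \<noteq> {}" by auto
  have "\<exists>x\<in>A. lo \<le> s + v x \<and> s + v x \<le> hi"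
  proof (cases "s \<le> 0")
    case True
    have "\<exists>x\<in>A. 0 \<le> v x"
    proof (rule ccontr)
      assume "\<not> ?thesis"
      hence "0 < (\<Sum>y\<in>A. - v y)" using ne Suc.prems(1) by (intro sum_pos) auto
      hence "sum v A < 0" by (simp add: sum_negf)
      thus False using True Suc.prems(7) by linarith
    qed
    then obtain x where "x \<in> A" "0 \<le> v x" by blast
    thus ?thesis using True Suc.prems by force
  next
    case False
    have "\<exists>x\<in>A. v x < 0"
    proof (rule ccontr)
      assume "\<not> ?thesis"
      hence "0 \<le> sum v A" by (intro sum_nonneg) auto
      thus False using False Suc.prems(7) by linarith
    qed
    then obtain x where "x \<in> A" "v x < 0" by blast
    thus ?thesis using False Suc.prems by force
  qed
  then obtain x where x: "x \<in> A" "lo \<le> s + v x" "s + v x \<le> hi" by blast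
  have "(s + v x) + sum v (A - {x}) = 0"
    using Suc.prems(1,7) x(1) by (simp add: sum_diff1)
  moreover have "n = card (A - {x})" using Suc.hyps(2) x(1) Suc.prems(1) by simp
  ultimately obtain xs where xs: "distinct xs" "set xs = A - {x}"
    "\<forall>k\<le>length xs. lo \<le> (s + v x) + (\<Sum>j<k. v (xs!j)) \<and> (s + v x) + (\<Sum>j<k. v (xs!j)) \<le> hi"
    using Suc.hyps(1)[of "A - {x}" "s + v x"] Suc.prems x by auto
  have dd: "distinct (x # xs)" "set (x # xs) = A" using xs x(1) by auto
  have kk: "lo \<le> s + (\<Sum>j<k. v ((x # xs) ! j)) \<and> s + (\<Sum>j<k. v ((x # xs) ! j)) \<le> hi"
    if k: "k \<le> length (x # xs)" for k
  proof (cases k)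
    case 0 thus ?thesis using Suc.prems by simp
  next
    case (Suc k')
    have "(\<Sum>j<k. v ((x # xs) ! j)) = v x + (\<Sum>j<k'. v (xs ! j))"
      unfolding Suc sum.lessThan_Suc_shift by simp
    moreover have "k' \<le> length xs" using k Suc by simp
    ultimately show ?thesis using xs(3) by (simp add: add.assoc)
  qed
  show ?case using dd kk by blast
qed

lemma window:
  fixes a :: "nat \<Rightarrow> real"
  assumes mpos: "m > 0" and a0: "(\<Sum>j<m. a j) = 0" and u: "u < m"
  shows "(\<Sum>i<L. a ((u + i) mod m)) = (\<Sum>j<(u + L) mod m. a j) - (\<Sum>j<u. a j)"
proof (induction L)
  case 0 thus ?case using u by simp
next
  case (Suc L)
  have step: "(\<Sum>j<(x + 1) mod m. a j) = (\<Sum>j<x. a j) + a x" if "x < m" for x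
  proof (cases "x + 1 < m")
    case True thus ?thesis by simp
  next
    case False
    hence "x + 1 = m" using that by simp
    hence "(\<Sum>j<x. a j) + a x = 0" using a0 by (metis Suc_eq_plus1 sum.lessThan_Suc)
    thus ?thesis using \<open>x + 1 = m\<close> by simp
  qed
  have "(u + Suc L) mod m = ((u + L) mod m + 1) mod m" by (simp add: mod_Suc_eq)
  hence "(\<Sum>j<(u + Suc L) mod m. a j) = (\<Sum>j<(u + L) mod m. a j) + a ((u + L) mod m)"
    using step[of "(u + L) mod m"] mpos by simp
  thus ?case using Suc by simp
qed

theorem theorem1:
  fixes Ys :: "real set" and k :: nat
  assumes "finite Ys" and "Ys \<noteq> {}"
  shows "(\<exists>\<sigma>. encoding_scheme Ys k (card Ys) \<sigma> \<and>
            D_max Ys - D_ach Ys k \<sigma> \<le> D_max Ys / 2^k)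
       \<and> (\<exists>\<sigma>. encoding_scheme Ys k (card Ys) \<sigma> \<and>
            D_max Ys - D_ach Ys k \<sigma> \<le>
              (Max {a - b | a b. a \<in> Ys \<and> b \<in> Ys})^2 / 2^(2*k))"
proof -
  note fin = assms(1) and ne = assms(2)
  define m where "m = card Ys"
  have mpos: "m > 0" using fin ne by (simp add: m_def card_gt_0_iff)
  define \<mu> where "\<mu> = mean_unif Ys"
  define lo where "lo = Min Ys - \<mu>"
  define hi where "hi = Max Ys - \<mu>"
  define d where "d = Max {a - b | a b. a \<in> Ys \<and> b \<in> Ys}"
  define n :: nat where "n = 2^k"
  have npos: "n > 0" by (simp add: n_def)
  have sumY: "(\<Sum>y\<in>Ys. y) = m * \<mu>" using mpos by (simp add: \<mu>_def mean_unif_def m_def)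
  have dev0: "(\<Sum>y\<in>Ys. y - \<mu>) = 0" using sumY by (simp add: sum_subtractf m_def)
  have "m * Min Ys \<le> (\<Sum>y\<in>Ys. y)" unfolding m_def
    by (rule sum_bounded_below) (use fin in simp)
  hence lo0: "lo \<le> 0" using sumY mpos by (simp add: lo_def)
  have "(\<Sum>y\<in>Ys. y) \<le> m * Max Ys" unfolding m_def
    by (rule sum_bounded_above) (use fin in simp)
  hence hi0: "0 \<le> hi" using sumY mpos by (simp add: hi_def)
  have vb: "\<forall>y\<in>Ys. lo \<le> y - \<mu> \<and> y - \<mu> \<le> hi" using fin by (auto simp: lo_def hi_def)
  obtain xs where xs: "distinct xs" "set xs = Ys"
    "\<forall>k\<le>length xs. lo \<le> 0 + (\<Sum>j<k. xs!j - \<mu>) \<and> 0 + (\<Sum>j<k. xs!j - \<mu>) \<le> hi"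
    using ordering[of Ys lo hi "\<lambda>y. y - \<mu>" 0] fin lo0 hi0 vb dev0 by auto
  have len: "length xs = m" using xs distinct_card m_def by metis
  define e where "e j = xs ! j" for j
  have bij: "bij_betw e {..<m} Ys" unfolding e_def using xs len
    by (intro bij_betw_nth) auto
  define a where "a j = e j - \<mu>" for j
  have a0: "(\<Sum>j<m. a j) = 0"
    using sum.reindex_bij_betw[OF bij, of "\<lambda>y. y - \<mu>"] dev0 by (simp add: a_def)
  have aD: "(\<Sum>j<m. a j ^ 2) = m * D_max Ys"
  proof -
    have "(\<Sum>j<m. a j ^ 2) = (\<Sum>y\<in>Ys. (y - \<mu>)^2)"
      using sum.reindex_bij_betw[OF bij, of "\<lambda>y. (y - \<mu>)^2"] by (simp add: a_def)
    thus ?thesis using mpos by (simp add: D_max_def \<mu>_def m_def)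
  qed
  have Dnn: "0 \<le> D_max Ys" unfolding D_max_def by (simp add: sum_nonneg)
  have KL: "D_max Ys - (\<Sum>u<m. (\<Sum>i\<in>{1..n}. a ((u + c i) mod m))^2) / (real m * n^2)
          \<le> eve_mse Ys k (\<lambda>i y. (inv_into {..<m} e y + m - c i) mod m + 1) f"
    if "\<And>i. c i < m" for c f
    using key_lower[OF fin m_def[symmetric] mpos bij that refl, where k=k and f=f]
    by (simp add: a_def \<mu>_def n_def)
  have final: "D_max Ys - D_ach Ys k (\<lambda>i y. (inv_into {..<m} e y + m - c i) mod m + 1) \<le> B"
    if "\<And>i. c i < m" "(\<Sum>u<m. (\<Sum>i\<in>{1..n}. a ((u + c i) mod m))^2) / (real m * n^2) \<le> B"
    for c B
  proof -
    have "D_max Ys - B \<le> D_ach Ys k (\<lambda>i y. (inv_into {..<m} e y + m - c i) mod m + 1)"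
      unfolding D_ach_def
    proof (rule cINF_greatest)
      fix f :: "nat \<Rightarrow> real"
      have "D_max Ys - B \<le> D_max Ys - (\<Sum>u<m. (\<Sum>i\<in>{1..n}. a ((u + c i) mod m))^2) / (real m * n^2)"
        using that(2) by linarith
      also have "\<dots> \<le> eve_mse Ys k (\<lambda>i y. (inv_into {..<m} e y + m - c i) mod m + 1) f"
        by (rule KL) (rule that(1))
      finally show "D_max Ys - B \<le> eve_mse Ys k (\<lambda>i y. (inv_into {..<m} e y + m - c i) mod m + 1) f" .
    qed simp
    thus ?thesis by simp
  qed
  have part1: "\<exists>\<sigma>. encoding_scheme Ys k m \<sigma> \<and> D_max Ys - D_ach Ys k \<sigma> \<le> D_max Ys / 2^k"
  proof -
    obtain c where c: "\<forall>i. c i < m" and cb: "(\<Sum>u<m. (\<Sum>i\<in>{1..n}. a ((u + c i) mod m))^2) \<le> n * (\<Sum>j<m. a j ^ 2)"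
      using greedy[OF mpos a0, of n] by blast
    have "(\<Sum>u<m. (\<Sum>i\<in>{1..n}. a ((u + c i) mod m))^2) / (real m * n^2) \<le> (n * (m * D_max Ys)) / (real m * n^2)"
      using cb aD mpos by (intro divide_right_mono) auto
    also have "\<dots> = D_max Ys / 2^k" using mpos npos by (simp add: n_def power2_eq_square field_simps)
    finally show ?thesis using final[of c] c enc_ok[OF mpos bij, of c k] by blast
  qed
  have part2: "\<exists>\<sigma>. encoding_scheme Ys k m \<sigma> \<and> D_max Ys - D_ach Ys k \<sigma> \<le> d^2 / 2^(2*k)"
  proof -
    define c where "c i = (i - 1) mod m" for i
    have c: "\<And>i. c i < m" using mpos by (simp add: c_def)
    define S where "S t = (\<Sum>j<t. a j)" for t
    have Sb: "lo \<le> S t \<and> S t \<le> hi" if "t \<le> m" for t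
      using xs(3) that len by (simp add: S_def a_def e_def)
    have fin2: "finite {a - b | a b. a \<in> Ys \<and> b \<in> Ys}"
    proof -
      have "{a - b | a b. a \<in> Ys \<and> b \<in> Ys} = (\<lambda>(a,b). a - b) ` (Ys \<times> Ys)" by auto
      thus ?thesis using fin by simp
    qed
    have "Max Ys \<in> Ys" "Min Ys \<in> Ys" using fin ne by auto
    hence "Max Ys - Min Ys \<in> {a - b | a b. a \<in> Ys \<and> b \<in> Ys}" by blast
    hence hld: "hi - lo \<le> d" unfolding d_def hi_def lo_def using fin2 by (simp add: Max_ge)
    have Pb: "(\<Sum>i\<in>{1..n}. a ((u + c i) mod m))^2 \<le> d^2" if u: "u < m" for u
    proof -
      have "(\<Sum>i\<in>{1..n}. a ((u + c i) mod m)) = (\<Sum>i<n. a ((u + i) mod m))"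
        by (simp add: sum.atLeast1_atMost_eq c_def mod_add_right_eq)
      also have "\<dots> = S ((u + n) mod m) - S u" using window[OF mpos a0 u] by (simp add: S_def)
      finally have eq: "(\<Sum>i\<in>{1..n}. a ((u + c i) mod m)) = S ((u + n) mod m) - S u" .
      have "(u + n) mod m \<le> m" using mpos by (simp add: less_imp_le)
      hence "\<bar>S ((u + n) mod m) - S u\<bar> \<le> d" using Sb[of "(u+n) mod m"] Sb[of u] u hld by auto
      hence "\<bar>S ((u + n) mod m) - S u\<bar>^2 \<le> d^2" by (rule power_mono) simp
      thus ?thesis using eq by simp
    qed
    have "(\<Sum>u<m. (\<Sum>i\<in>{1..n}. a ((u + c i) mod m))^2) \<le> m * d^2"
      using sum_bounded_above[of "{..<m}" "\<lambda>u. (\<Sum>i\<in>{1..n}. a ((u + c i) mod m))^2" "d^2"] Pb by simp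
    hence "(\<Sum>u<m. (\<Sum>i\<in>{1..n}. a ((u + c i) mod m))^2) / (real m * n^2) \<le> (m * d^2) / (real m * n^2)"
      using mpos by (intro divide_right_mono) auto
    also have "\<dots> = d^2 / 2^(2*k)" using mpos by (simp add: n_def power_mult power2_eq_square[symmetric] power_mult_distrib[symmetric] mult.commute)
    finally show ?thesis using final[of c] c enc_ok[OF mpos bij, of c k] by blast
  qed
  show ?thesis using part1 part2 by (simp add: m_def d_def)
qed

end
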